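(* Let $t\ge1$ be an integer. The midpoint $Q$ of the edge of $P_t$ of slope $1$ has coordinates $(H_t,H_t/2)$; in particular the segment from the origin $O$ to $Q$ has slope $\tfrac12$. Moreover, $H_t$ is even if and only if $t$ is even.
   Context: Fix an integer $t\ge1$. Let $S_t$ be the set of rational numbers $s$ which, written in lowest terms as $s=a/b$ with $a\in\mathbb Z$ and $b$ a positive integer, satisfy $b\le t$. For $s=a/b\in S_t$ let $v_s=\lfloor t/b\rfloor\,(b,a)$, and $V_t=\{v_s:s\in S_t\}$. The grid parabola $P_t$ is the infinite convex polygonal chain obtained by concatenating the vectors of $V_t$ in order of increasing slope, positioned so that the edge given by $(t,0)$ goes from $(-t/2,0)$ to $(t/2,0)$. The horizontal period is $H_t=\sum_{(x,y)\in V_t,\ 0<y/x\le1} x=\sum_{1\le y\le x\le t,\ \gcd(x,y)=1}\lfloor t/x\rfloor\,x$. *)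

theory Defs
  imports "HOL-Analysis.Analysis"
begin

definition S_set :: "nat \<Rightarrow> rat set" where
  "S_set t = {s. snd (quotient_of s) \<le> int t}"

definition vvec :: "nat \<Rightarrow> rat \<Rightarrow> real \<times> real" where
  "vvec t s = (case quotient_of s of (a, b) \<Rightarrow>
      (real_of_int ((int t div b) * b), real_of_int ((int t div b) * a)))"

text \<open>Starting vertex of the edge of the grid parabola P_t with slope s:
  the edges are the vectors v_s concatenated in order of increasing slope,
  with the edge of slope 0 (vector (t,0)) going from (-t/2,0) to (t/2,0).\<close>
definition edge_start :: "nat \<Rightarrow> rat \<Rightarrow> real \<times> real" where
  "edge_start t s =
     (if 0 \<le> s then (- real t / 2, 0) + (\<Sum>s'\<in>S_set t \<inter> {0..<s}. vvec t s')
      else (- real t / 2, 0) - (\<Sum>s'\<in>S_set t \<inter> {s..<0}. vvec t s'))"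

definition edge_end :: "nat \<Rightarrow> rat \<Rightarrow> real \<times> real" where
  "edge_end t s = edge_start t s + vvec t s"

definition edge_midpoint :: "nat \<Rightarrow> rat \<Rightarrow> real \<times> real" where
  "edge_midpoint t s = midpoint (edge_start t s) (edge_end t s)"

definition H :: "nat \<Rightarrow> nat" where
  "H t = (\<Sum>(x, y) \<in> {(x, y). 1 \<le> y \<and> y \<le> x \<and> x \<le> t \<and> coprime x y}. (t div x) * x)"

end

theory Submission
  imports Defs
begin

definition PP :: "nat \<Rightarrow> (int \<times> int) set" where
  "PP t = {(a,b). 0 \<le> a \<and> a < b \<and> b \<le> int t \<and> coprime a b}"

lemma PP_finite: "finite (PP t)"
  by (rule finite_subset[of _ "{0..int t} \<times> {0..int t}"]) (auto simp: PP_def)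

lemma PP_a0: "(0, b) \<in> PP t \<Longrightarrow> b = 1"
  by (auto simp: PP_def)

lemma sum_A:
  "(\<Sum>s\<in>S_set t \<inter> {0..<1}. vvec t s)
   = (\<Sum>p\<in>PP t. (real_of_int ((int t div snd p) * snd p), real_of_int ((int t div snd p) * fst p)))"
proof (rule sum.reindex_bij_witness[of _ "\<lambda>p. Fract (fst p) (snd p)" quotient_of])
  fix s assume s: "s \<in> S_set t \<inter> {0..<1}"
  show "Fract (fst (quotient_of s)) (snd (quotient_of s)) = s" by simp
  obtain a b where q: "quotient_of s = (a,b)" by force
  have b: "b > 0" using quotient_of_denom_pos[OF q] .
  have c: "coprime a b" using quotient_of_coprime[OF q] .
  have sf: "s = Fract a b" using Fract_quotient_of[of s] q by simp
  have "0 \<le> a" "a < b" using s b sf by (auto simp: zero_le_Fract_iff Fract_less_one_iff)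
  moreover have "b \<le> int t" using s q by (auto simp: S_set_def)
  ultimately show "quotient_of s \<in> PP t" using q c by (auto simp: PP_def)
  show "(real_of_int ((int t div snd (quotient_of s)) * snd (quotient_of s)),
         real_of_int ((int t div snd (quotient_of s)) * fst (quotient_of s))) = vvec t s"
    using q by (simp add: vvec_def)
next
  fix p assume p: "p \<in> PP t"
  obtain a b where pe: "p = (a,b)" by force
  have ab: "0 \<le> a" "a < b" "b \<le> int t" "coprime a b" using p pe by (auto simp: PP_def)
  have q: "quotient_of (Fract a b) = (a,b)" using ab by (simp add: quotient_of_Fract)
  show "quotient_of (Fract (fst p) (snd p)) = p" using q pe by simp
  show "Fract (fst p) (snd p) \<in> S_set t \<inter> {0..<1}"
    using q pe ab by (simp add: S_set_def zero_le_Fract_iff Fract_less_one_iff)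
qed

definition X :: "nat \<Rightarrow> int" where "X t = (\<Sum>p\<in>PP t. (int t div snd p) * snd p)"
definition Y :: "nat \<Rightarrow> int" where "Y t = (\<Sum>p\<in>PP t. (int t div snd p) * fst p)"

lemma X_H: "X t = int (H t)"
proof -
  let ?Q = "{(x, y). 1 \<le> y \<and> y \<le> x \<and> x \<le> t \<and> coprime x y}"
  have "int (H t) = (\<Sum>q\<in>?Q. (int t div int (fst q)) * int (fst q))"
    unfolding H_def by (simp add: of_nat_sum case_prod_beta zdiv_int)
  also have "\<dots> = X t" unfolding X_def
  proof (rule sum.reindex_bij_witness[of _ "\<lambda>p. (nat (snd p), if fst p = 0 then 1 else nat (fst p))"
        "\<lambda>q. (if fst q = 1 then 0 else int (snd q), int (fst q))"])
    fix q assume q: "q \<in> ?Q"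
    obtain x y where qe: "q = (x,y)" by force
    have h: "1 \<le> y" "y \<le> x" "x \<le> t" "coprime x y" using q qe by auto
    have cy: "coprime (int x) (int y)" using h(4) by simp
    show "(nat (snd (if fst q = 1 then 0 else int (snd q), int (fst q))),
          if fst (if fst q = 1 then 0 else int (snd q), int (fst q)) = 0 then 1
          else nat (fst (if fst q = 1 then 0 else int (snd q), int (fst q)))) = q"
      using h qe by auto
    have "x = 1 \<or> y < x"
    proof (rule ccontr)
      assume "\<not> (x = 1 \<or> y < x)" then have "y = x" "x \<noteq> 1" using h by auto
      then show False using h(4) by simp
    qed
    then show "(if fst q = 1 then 0 else int (snd q), int (fst q)) \<in> PP t"
      using h qe cy by (auto simp: PP_def coprime_commute)
    show "(int t div snd (if fst q = 1 then 0 else int (snd q), int (fst q))) *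
          snd (if fst q = 1 then 0 else int (snd q), int (fst q)) =
          (int t div int (fst q)) * int (fst q)" by simp
  next
    fix p assume p: "p \<in> PP t"
    obtain a b where pe: "p = (a,b)" by force
    have ab: "0 \<le> a" "a < b" "b \<le> int t" "coprime a b" using p pe by (auto simp: PP_def)
    have b1: "a = 0 \<Longrightarrow> b = 1" using ab by simp
    show "(if fst (nat (snd p), if fst p = 0 then 1 else nat (fst p)) = 1 then 0
           else int (snd (nat (snd p), if fst p = 0 then 1 else nat (fst p))),
          int (fst (nat (snd p), if fst p = 0 then 1 else nat (fst p)))) = p"
      using pe ab b1 by auto
    have cn: "coprime (nat b) (nat a)" using ab
      
    proof -
      have e: "int (nat b) = b" "int (nat a) = a" using ab by linarith+
      have "coprime (int (nat b)) (int (nat a))" using ab(4) e by (metis coprime_commute)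
      then show ?thesis by (simp only: coprime_int_iff)
    qed
    show "(nat (snd p), if fst p = 0 then 1 else nat (fst p)) \<in> ?Q"
      using pe ab b1 cn by (auto simp: coprime_commute)
  qed
  finally show ?thesis by simp
qed

lemma Y2: "2 * Y t = X t - int t" if "t \<ge> 1"
proof -
  let ?P' = "PP t - {(0,1)}"
  have in01: "(0,1) \<in> PP t" using that by (simp add: PP_def)
  have fin: "finite ?P'" using PP_finite by simp
  have Y': "Y t = (\<Sum>p\<in>?P'. (int t div snd p) * fst p)"
    unfolding Y_def using sum.remove[OF PP_finite in01, of "\<lambda>p. (int t div snd p) * fst p"] by simp
  have X': "X t = int t + (\<Sum>p\<in>?P'. (int t div snd p) * snd p)"
    unfolding X_def using sum.remove[OF PP_finite in01, of "\<lambda>p. (int t div snd p) * snd p"] by simp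
  have memb: "(snd p - fst p, snd p) \<in> ?P'" if p: "p \<in> ?P'" for p
  proof -
    obtain a b where pe: "p = (a,b)" by force
    have ab: "0 \<le> a" "a < b" "b \<le> int t" "coprime a b" "(a,b) \<noteq> (0,1)" using p pe by (auto simp: PP_def)
    have "a \<noteq> 0" using ab by auto
    have c: "coprime (b - a) b"
    proof (rule coprimeI)
      fix d assume d1: "d dvd b - a" and d2: "d dvd b"
      have "d dvd b - (b - a)" by (rule dvd_diff[OF d2 d1])
      then have "d dvd a" by simp
      then show "is_unit d" using ab(4) d2 by (meson coprime_def)
    qed
    show ?thesis using pe ab c \<open>a \<noteq> 0\<close> by (auto simp: PP_def)
  qed
  have refl: "(\<Sum>p\<in>?P'. (int t div snd p) * fst p) = (\<Sum>p\<in>?P'. (int t div snd p) * (snd p - fst p))"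
    by (rule sum.reindex_bij_witness[of _ "\<lambda>p. (snd p - fst p, snd p)" "\<lambda>p. (snd p - fst p, snd p)"])
       (simp_all add: memb del: Diff_iff)
  have "2 * Y t = (\<Sum>p\<in>?P'. (int t div snd p) * fst p) + (\<Sum>p\<in>?P'. (int t div snd p) * (snd p - fst p))"
    using Y' refl by simp
  also have "\<dots> = (\<Sum>p\<in>?P'. (int t div snd p) * snd p)"
    by (simp add: sum.distrib[symmetric] algebra_simps)
  finally show ?thesis using X' by simp
qed

theorem proposition1:
  fixes t :: nat
  assumes "t \<ge> 1"
  shows "edge_midpoint t 1 = (real (H t), real (H t) / 2)
         \<and> snd (edge_midpoint t 1) / fst (edge_midpoint t 1) = 1 / 2
         \<and> (even (H t) \<longleftrightarrow> even t)"
proof -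
  have sA: "(\<Sum>s\<in>S_set t \<inter> {0..<1}. vvec t s) = (real_of_int (X t), real_of_int (Y t))"
    unfolding sum_A X_def Y_def by (simp add: sum_prod)
  have v1: "vvec t 1 = (real t, real t)" by (simp add: vvec_def)
  have Yr: "2 * real_of_int (Y t) = real (H t) - real t"
    using Y2[OF assms] X_H[of t] by (metis of_int_diff of_int_mult of_int_numeral of_int_of_nat_eq)
  have mid: "edge_midpoint t 1 = (real (H t), real (H t) / 2)"
    unfolding edge_midpoint_def edge_end_def edge_start_def midpoint_def
    using sA v1 X_H[of t] Yr by (simp add: field_simps)
  have Hpos: "H t \<ge> 1"
  proof -
    have "Y t \<ge> 0" unfolding Y_def
      by (rule sum_nonneg) (auto simp: PP_def pos_imp_zdiv_nonneg_iff)
    then have "int t \<le> X t" using Y2[OF assms] by simp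
    then show ?thesis using X_H[of t] assms by simp
  qed
  have par: "even (H t) \<longleftrightarrow> even t"
  proof -
    have "int (H t) = int t + 2 * Y t" using Y2[OF assms] X_H[of t] by simp
    then show ?thesis by (metis even_add even_of_nat_iff dvd_triv_left)
  qed
  show ?thesis using mid Hpos par by simp
qed

end
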